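(* Let $\mathbb{X}$ be a smooth Banach space and $\mathbb{Y}$ an $n$-dimensional subspace of $\mathbb{X}$. Then $\mathbb{Y}$ is coproximinal if and only if $\dim\operatorname{span}\{y^*\in S_{\mathbb{X}^*}: y^*\in J(y),\ y\in\mathbb{Y}\}=n$.
   Context: For $y\neq 0$, $J(y)=\{f\in\mathbb{X}^*:\|f\|=1,f(y)=\|y\|\}$; $\mathbb{X}$ is smooth if $J(y)$ is a singleton for every unit vector $y$. $S_{\mathbb{X}^*}$ is the unit sphere of $\mathbb{X}^*$. Given $x\in\mathbb{X}$, $y_0\in\mathbb{Y}$ is a best coapproximation to $x$ out of $\mathbb{Y}$ if $\|y_0-y\|\le\|x-y\|$ for all $y\in\mathbb{Y}$; $\mathbb{Y}$ is coproximinal if every $x\in\mathbb{X}$ has a best coapproximation out of $\mathbb{Y}$. *)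

theory Defs
  imports "HOL-Analysis.Analysis"
begin

definition duality_map :: "'a::real_normed_vector \<Rightarrow> ('a \<Rightarrow>\<^sub>L real) set" where
  "duality_map y = {f. norm f = 1 \<and> blinfun_apply f y = norm y}"

definition smooth_space :: "'a::real_normed_vector itself \<Rightarrow> bool" where
  "smooth_space _ \<longleftrightarrow> (\<forall>y::'a. norm y = 1 \<longrightarrow> (\<exists>!f. f \<in> duality_map y))"

definition is_best_coapprox :: "'a::real_normed_vector set \<Rightarrow> 'a \<Rightarrow> 'a \<Rightarrow> bool" where
  "is_best_coapprox Y x y0 \<longleftrightarrow> y0 \<in> Y \<and> (\<forall>y\<in>Y. norm (y0 - y) \<le> norm (x - y))"

definition coproximinal :: "'a::real_normed_vector set \<Rightarrow> bool" where
  "coproximinal Y \<longleftrightarrow> (\<forall>x. \<exists>y0. is_best_coapprox Y x y0)"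

definition has_dimension :: "'a::real_vector set \<Rightarrow> nat \<Rightarrow> bool" where
  "has_dimension V n \<longleftrightarrow> (\<exists>B. finite B \<and> independent B \<and> card B = n \<and> span B = V)"

end

theory Submission imports Defs "HOL-Library.Function_Algebras" begin

lemma closed_cluster:
  fixes F :: "('b::topological_space) filter"
  assumes "closed C" "eventually (\<lambda>x. x \<in> C) F" "inf (nhds h) F \<noteq> bot"
  shows "h \<in> C"
proof (rule ccontr)
  assume "h \<notin> C"
  then have "eventually (\<lambda>x. x \<notin> C) (nhds h)"
    using assms(1) by (simp add: eventually_nhds) (metis open_Compl Compl_iff)
  then have "eventually (\<lambda>x. False) (inf (nhds h) F)"
    using assms(2) unfolding eventually_inf by blast
  then show False using assms(3) by (simp add: eventually_False)
qed

lemma cont_proj: "continuous_on UNIV (\<lambda>g::'a\<Rightarrow>real. g i)"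
  by simp

lemma compact_K: "compact (PiE UNIV (\<lambda>x::'a::real_normed_vector. {- norm x .. norm x}))"
proof -
  have "compactin (product_topology (\<lambda>i. euclidean) UNIV) (PiE UNIV (\<lambda>x::'a. {- norm x .. norm x}))"
    by (simp add: compactin_PiE)
  then show ?thesis by (simp add: euclidean_product_topology)
qed

lemma supp_neg:
  fixes y w :: "'a::real_normed_vector"
  assumes sm: "smooth_space TYPE('a)" and ny: "norm y = 1"
    and B: "\<forall>s. norm y \<le> norm (y + s *\<^sub>R w)"
  shows "\<exists>h. h \<in> duality_map y \<and> blinfun_apply h w \<le> 0"
proof -
  define t where "t k = - 1 / (real k + 1)" for k :: nat
  define z where "z k = y + t k *\<^sub>R w" for k
  have nz: "norm (z k) \<ge> 1" for k using B ny unfolding z_def by metis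
  have "\<exists>g. g \<in> duality_map (z k /\<^sub>R norm (z k))" for k
  proof -
    have "norm (z k /\<^sub>R norm (z k)) = 1" using nz[of k] by (cases "z k = 0") (auto simp: field_simps)
    then show ?thesis using sm unfolding smooth_space_def by blast
  qed
  then obtain g where g: "\<And>k. g k \<in> duality_map (z k /\<^sub>R norm (z k))" by metis
  have gn: "norm (g k) = 1" for k using g[of k] by (simp add: duality_map_def)
  have gz: "g k (z k) = norm (z k)" for k
  proof -
    have "g k (z k /\<^sub>R norm (z k)) = 1" using g[of k] nz[of k] by (cases "z k = 0") (auto simp: duality_map_def)
    then show ?thesis using nz[of k] by (simp add: blinfun.scaleR_right field_simps)
  qed
  have gb: "\<bar>g k x\<bar> \<le> norm x" for k x
    using norm_blinfun[of "g k" x] gn[of k] by simp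
  have gw: "g k w \<le> 0" for k
  proof -
    have "g k y \<le> 1" using gb[of k y] ny by simp
    moreover have "g k y + t k * g k w = norm (z k)"
      using gz[of k] by (simp add: z_def blinfun.add_right blinfun.scaleR_right)
    moreover have "t k < 0" by (simp add: t_def)
    ultimately show ?thesis using nz[of k]
      by (smt (verit) mult_neg_pos)
  qed
  have gy: "g k y \<ge> 1 - norm w / (real k + 1)" for k
  proof -
    have "g k y + t k * g k w = norm (z k)"
      using gz[of k] by (simp add: z_def blinfun.add_right blinfun.scaleR_right)
    moreover have "\<bar>t k * g k w\<bar> \<le> norm w / (real k + 1)"
      using gb[of k w] by (simp add: t_def abs_mult divide_right_mono)
    ultimately show ?thesis using nz[of k] by linarith
  qed
  define F where "F = filtermap (\<lambda>k. blinfun_apply (g k)) sequentially"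
  define K where "K = PiE UNIV (\<lambda>x::'a. {- norm x .. norm x})"
  have "F \<noteq> bot" by (simp add: F_def filtermap_bot_iff)
  moreover have "eventually (\<lambda>x. x \<in> K) F"
    unfolding F_def K_def eventually_filtermap using gb by (intro always_eventually allI) (simp add: PiE_UNIV_domain Pi_iff abs_le_iff, smt (verit))
  ultimately obtain h0 where h0K: "h0 \<in> K" and cl: "inf (nhds h0) F \<noteq> bot"
    using compact_K[where 'a='a] unfolding compact_filter K_def by blast
  have add: "h0 (a + b) = h0 a + h0 b" for a b
  proof -
    have "h0 \<in> {f. f (a + b) = f a + f b}"
      by (rule closed_cluster[OF _ _ cl])
        (auto intro!: closed_Collect_eq continuous_intros simp: F_def eventually_filtermap blinfun.add_right)
    then show ?thesis by simp
  qed
  have scl: "h0 (c *\<^sub>R a) = c * h0 a" for c a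
  proof -
    have "h0 \<in> {f. f (c *\<^sub>R a) = c * f a}"
      by (rule closed_cluster[OF _ _ cl])
        (auto intro!: closed_Collect_eq continuous_intros simp: F_def eventually_filtermap blinfun.scaleR_right)
    then show ?thesis by simp
  qed
  have hw: "h0 w \<le> 0"
  proof -
    have "h0 \<in> {f. f w \<le> 0}"
      by (rule closed_cluster[OF _ _ cl])
        (auto intro!: closed_Collect_le continuous_intros simp: F_def eventually_filtermap gw)
    then show ?thesis by simp
  qed
  have hy: "h0 y \<ge> 1 - norm w / (real m + 1)" for m
  proof -
    have "h0 \<in> {f. 1 - norm w / (real m + 1) \<le> f y}"
    proof (rule closed_cluster[OF _ _ cl])
      show "closed {f. 1 - norm w / (real m + 1) \<le> f y}"
        by (auto intro!: closed_Collect_le continuous_intros)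
      have "\<forall>k\<ge>m. 1 - norm w / (real m + 1) \<le> g k y"
      proof (intro allI impI)
        fix k assume "m \<le> k"
        then have "norm w / (real k + 1) \<le> norm w / (real m + 1)"
          by (intro divide_left_mono) auto
        then show "1 - norm w / (real m + 1) \<le> g k y" using gy[of k] by linarith
      qed
      then show "eventually (\<lambda>x. x \<in> {f. 1 - norm w / (real m + 1) \<le> f y}) F"
        unfolding F_def eventually_filtermap eventually_sequentially by auto
    qed
    then show ?thesis by simp
  qed
  have hb: "\<bar>h0 x\<bar> \<le> norm x" for x using h0K unfolding K_def PiE_iff abs_le_iff by (metis UNIV_I atLeastAtMost_iff minus_le_iff)
  have hy1: "h0 y = 1"
  proof -
    have "h0 y \<ge> 1"
    proof (rule ccontr)
      assume "\<not> h0 y \<ge> 1"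
      then have "0 < 1 - h0 y" by simp
      then obtain m :: nat where "norm w / (1 - h0 y) < real m + 1"
        using reals_Archimedean2[of "norm w / (1 - h0 y)"] by (metis add.commute less_add_same_cancel2 less_trans zero_less_one)
      then have "norm w / (real m + 1) < 1 - h0 y" using \<open>0 < 1 - h0 y\<close>
        by (simp add: field_simps)
      then show False using hy[of m] by linarith
    qed
    then show ?thesis using hb[of y] ny by simp
  qed
  have bl: "bounded_linear h0"
    by (rule bounded_linear_intro[where K=1]) (use add scl hb in auto)
  define h where "h = Blinfun h0"
  have ha: "blinfun_apply h = h0" using bl by (simp add: h_def bounded_linear_Blinfun_apply)
  have "norm h \<le> 1" by (rule norm_blinfun_bound) (use hb ha in auto)
  moreover have "1 \<le> norm h" using norm_blinfun[of h y] ha hy1 ny by simp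
  ultimately have "norm h = 1" by simp
  then have "h \<in> duality_map y" using ha hy1 ny by (simp add: duality_map_def)
  then show ?thesis using ha hw by auto
qed

instantiation "fun" :: (type, real_vector) real_vector
begin
definition scaleR_fun_def: "scaleR r f = (\<lambda>x. r *\<^sub>R f x)"
instance by standard (auto simp: scaleR_fun_def fun_eq_iff scaleR_add_right scaleR_add_left)
end

definition delta :: "'b \<Rightarrow> 'b \<Rightarrow> real" where "delta a = (\<lambda>z. if z = a then 1 else 0)"

lemma sum_fun_app: "finite A \<Longrightarrow> (\<Sum>a\<in>A. (f a :: 'b \<Rightarrow> real)) z = (\<Sum>a\<in>A. f a z)"
  by (induction A rule: finite_induct) (auto simp: plus_fun_apply)

lemma ind_span:
  assumes "finite A" "\<forall>z. z \<notin> A \<longrightarrow> g z = 0"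
  shows "g \<in> span (delta ` A)"
proof -
  have "g = (\<Sum>a\<in>A. g a *\<^sub>R delta a)"
  proof
    fix z
    have "(\<Sum>a\<in>A. g a *\<^sub>R delta a) z = (\<Sum>a\<in>A. g a * delta a z)"
      using assms(1) by (simp add: sum_fun_app scaleR_fun_def)
    also have "\<dots> = (\<Sum>a\<in>A. if a = z then g z else 0)"
      by (rule sum.cong) (auto simp: delta_def)
    also have "\<dots> = g z" using assms by (simp add: sum.delta)
    finally show "g z = (\<Sum>a\<in>A. g a *\<^sub>R delta a) z" by simp
  qed
  also have "\<dots> \<in> span (delta ` A)"
    by (intro span_sum span_scale span_base) auto
  finally show ?thesis .
qed

lemma card_bound:
  fixes V :: "('b \<Rightarrow> real) set"
  assumes "finite A" "independent V" "\<forall>v\<in>V. \<forall>z. z \<notin> A \<longrightarrow> v z = 0"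
  shows "finite V \<and> card V \<le> card A"
proof -
  have "finite V \<and> card V \<le> card (delta ` A)"
    by (rule independent_span_bound) (use assms ind_span in blast)+
  then show ?thesis using card_image_le[OF assms(1), of delta] by linarith
qed

lemma span_eval0:
  fixes C :: "('a::real_normed_vector \<Rightarrow>\<^sub>L real) set"
  assumes "f \<in> span C" "\<forall>g\<in>C. g x = 0"
  shows "f x = 0"
proof -
  have "subspace {g::'a \<Rightarrow>\<^sub>L real. g x = 0}"
    by (auto simp: subspace_def plus_blinfun.rep_eq scaleR_blinfun.rep_eq)
  then have "span C \<subseteq> {g::'a \<Rightarrow>\<^sub>L real. g x = 0}" using assms(2) by (intro span_minimal) auto
  then show ?thesis using assms(1) by auto
qed

lemma kernel_span:
  fixes g :: "'a::real_normed_vector \<Rightarrow>\<^sub>L real"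
  assumes "u \<in> span B" "\<forall>b\<in>B. g b = 0"
  shows "g u = 0"
proof -
  have "subspace {u. g u = 0}"
    by (auto simp: subspace_def blinfun.add_right blinfun.scaleR_right)
  then have "span B \<subseteq> {u. g u = 0}" using assms(2) by (intro span_minimal) auto
  then show ?thesis using assms(1) by auto
qed

lemma L_ex:
  fixes y :: "'a::real_normed_vector"
  assumes sm: "smooth_space TYPE('a)" and "y \<noteq> 0"
  shows "\<exists>f. norm f = 1 \<and> f \<in> duality_map y"
proof -
  have "norm (y /\<^sub>R norm y) = 1" using assms(2) by simp
  then obtain f where f: "f \<in> duality_map (y /\<^sub>R norm y)"
    using sm unfolding smooth_space_def by blast
  then have "norm f = 1" "f (y /\<^sub>R norm y) = 1" using assms(2) by (auto simp: duality_map_def)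
  then have "f y = norm y" using assms(2) by (simp add: blinfun.scaleR_right field_simps)
  then show ?thesis using \<open>norm f = 1\<close> by (auto simp: duality_map_def)
qed

lemma birkhoff_zero:
  fixes y w :: "'a::real_normed_vector"
  assumes sm: "smooth_space TYPE('a)" and "y \<noteq> 0" and f: "f \<in> duality_map y"
    and B: "\<forall>s. norm y \<le> norm (y + s *\<^sub>R w)"
  shows "f w = 0"
proof -
  define y1 where "y1 = y /\<^sub>R norm y"
  have ny1: "norm y1 = 1" using assms(2) by (simp add: y1_def)
  have B1: "\<forall>s. norm y1 \<le> norm (y1 + s *\<^sub>R w)"
  proof
    fix s
    have "y1 + s *\<^sub>R w = (y + (s * norm y) *\<^sub>R w) /\<^sub>R norm y"
      using assms(2) by (simp add: y1_def algebra_simps)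
    then have "norm (y1 + s *\<^sub>R w) = norm (y + (s * norm y) *\<^sub>R w) / norm y" by (simp add: divide_inverse_commute)
    moreover have "norm y \<le> norm (y + (s * norm y) *\<^sub>R w)" using B by blast
    ultimately have "norm y * 1 \<le> norm y * norm (y1 + s *\<^sub>R w)" using assms(2)
      by (simp add: field_simps)
    then show "norm y1 \<le> norm (y1 + s *\<^sub>R w)" using ny1 assms(2)
      by (metis mult_le_cancel_left_pos zero_less_norm_iff)
  qed
  have B2: "\<forall>s. norm y1 \<le> norm (y1 + s *\<^sub>R (- w))"
    using B1 by (metis scaleR_minus_left scaleR_minus_right)
  have fy1: "f \<in> duality_map y1"
    using f assms(2) by (auto simp: duality_map_def y1_def blinfun.scaleR_right)
  obtain h1 where h1: "h1 \<in> duality_map y1" "h1 w \<le> 0" using supp_neg[OF sm ny1 B1] by blast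
  obtain h2 where h2: "h2 \<in> duality_map y1" "h2 (- w) \<le> 0" using supp_neg[OF sm ny1 B2] by blast
  have "\<exists>!g. g \<in> duality_map y1" using sm ny1 unfolding smooth_space_def by blast
  then have "h1 = f" "h2 = f" using h1 h2 fy1 by blast+
  then show ?thesis using h1 h2 by (simp add: blinfun.minus_right)
qed

lemma dual_lemma:
  fixes BY :: "'a::real_normed_vector set" and B :: "('a \<Rightarrow>\<^sub>L real) set"
  assumes finB: "finite B" and finY: "finite BY" and indY: "independent BY"
    and sep: "\<forall>u\<in>span BY. u \<noteq> 0 \<longrightarrow> (\<exists>f\<in>span B. f u \<noteq> 0)"
  shows "card BY \<le> card B"
    and "card B \<le> card BY \<Longrightarrow> \<exists>y0\<in>span BY. \<forall>f\<in>B. f x = f y0"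
proof -
  define E where "E u = (\<lambda>f. if f \<in> B then blinfun_apply f u else 0)" for u
  have lin: "linear E"
    by (auto simp: linear_iff E_def fun_eq_iff scaleR_fun_def blinfun.add_right blinfun.scaleR_right)
  have ker: "\<forall>u\<in>span BY. E u = 0 \<longrightarrow> u = 0"
  proof (intro ballI impI, rule ccontr)
    fix u assume u: "u \<in> span BY" "E u = 0" "u \<noteq> 0"
    have "\<exists>f\<in>span B. f u \<noteq> 0" using sep u(1) u(3) by simp
    then obtain f where f: "f \<in> span B" "f u \<noteq> 0" by (elim bexE) simp
    have "\<forall>g\<in>B. g u = 0"
    proof
      fix g assume "g \<in> B"
      then have "E u g = g u" by (simp add: E_def)
      then show "g u = 0" using u(2) by simp
    qed
    then have "f u = 0" using span_eval0[OF f(1)] by blast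
    then show False using f(2) by simp
  qed
  have inj: "inj_on E (span BY)" using linear_inj_on_iff_eq_0[OF lin subspace_span] ker by blast
  have ind: "independent (E ` BY)" using linear_independent_injective_image[OF lin indY inj] .
  have injY: "inj_on E BY" using inj span_superset inj_on_subset by blast
  have cardE: "card (E ` BY) = card BY" using card_image[OF injY] .
  have supp1: "\<forall>v\<in>E ` BY. \<forall>z. z \<notin> B \<longrightarrow> v z = 0" by (auto simp: E_def)
  have supp2: "\<forall>v\<in>insert (E x) (E ` BY). \<forall>z. z \<notin> B \<longrightarrow> v z = 0" by (auto simp: E_def)
  show "card BY \<le> card B" using card_bound[OF finB ind supp1] cardE by simp
  assume le: "card B \<le> card BY"
  have "E x \<in> span (E ` BY)"
  proof (rule ccontr)
    assume nx: "E x \<notin> span (E ` BY)"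
    have i2: "independent (insert (E x) (E ` BY))" using independent_insertI[OF nx ind] .
    have c1: "card (insert (E x) (E ` BY)) \<le> card B" using card_bound[OF finB i2 supp2] by simp
    have "E x \<notin> E ` BY" using nx span_superset[of "E ` BY"] by auto
    then have "card (insert (E x) (E ` BY)) = card BY + 1" using cardE finY by simp
    then show False using le c1 by simp
  qed
  then have "E x \<in> E ` span BY" using span_linear_image[OF lin, of BY] by simp
  then obtain y0 where y0: "y0 \<in> span BY" "E x = E y0" by (elim imageE) simp
  have "\<forall>f\<in>B. f x = f y0"
  proof
    fix f assume "f \<in> B"
    have "E x f = E y0 f" using y0(2) by simp
    then show "f x = f y0" using \<open>f \<in> B\<close> by (simp add: E_def)
  qed
  then show "\<exists>y0\<in>span BY. \<forall>f\<in>B. f x = f y0" using y0(1) by blast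
qed

theorem mainTheorem9:
  fixes Y :: "'a::banach set" and n :: nat
  assumes "smooth_space TYPE('a)"
    and "subspace Y"
    and "has_dimension Y n"
  shows "coproximinal Y \<longleftrightarrow>
    has_dimension (span {f. norm f = 1 \<and> (\<exists>y\<in>Y. y \<noteq> 0 \<and> f \<in> duality_map y)}) n"
proof -
  note sm = assms(1)
  define S where "S = {f. norm f = 1 \<and> (\<exists>y\<in>Y. y \<noteq> 0 \<and> f \<in> duality_map y)}"
  obtain BY where BY: "finite BY" "independent BY" "card BY = n" "span BY = Y"
    using assms(3) unfolding has_dimension_def by blast
  have exS: "\<exists>f\<in>S. f y = norm y" if "y \<in> Y" "y \<noteq> 0" for y
    using L_ex[OF sm \<open>y \<noteq> 0\<close>] that unfolding S_def duality_map_def by blast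
  have sepS: "\<forall>u\<in>span BY. u \<noteq> 0 \<longrightarrow> (\<exists>f\<in>span S. f u \<noteq> 0)"
  proof (intro ballI impI)
    fix u assume "u \<in> span BY" "u \<noteq> 0"
    then obtain f where "f \<in> S" "f u = norm u" using exS BY(4) by blast
    moreover have "S \<subseteq> span S" by (rule span_superset)
    ultimately show "\<exists>f\<in>span S. f u \<noteq> 0" using \<open>u \<noteq> 0\<close> by (intro bexI[of _ f]) auto
  qed
  have cochar: "\<forall>f\<in>S. f x = f y0" if "is_best_coapprox Y x y0" for x y0
  proof
    fix f assume "f \<in> S"
    then obtain y' where y': "y' \<in> Y" "y' \<noteq> 0" "f \<in> duality_map y'" unfolding S_def by blast
    have y0: "y0 \<in> Y" "\<forall>y\<in>Y. norm (y0 - y) \<le> norm (x - y)"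
      using that unfolding is_best_coapprox_def by auto
    have "\<forall>s. norm y' \<le> norm (y' + s *\<^sub>R (x - y0))"
    proof
      fix s :: real
      show "norm y' \<le> norm (y' + s *\<^sub>R (x - y0))"
      proof (cases "s = 0")
        case True then show ?thesis by simp
      next
        case False
        define v where "v = y0 - (1 / s) *\<^sub>R y'"
        have v: "v \<in> Y" using y0(1) y' assms(2) unfolding v_def
          by (simp add: subspace_diff subspace_scale)
        have "norm (y0 - v) \<le> norm (x - v)" using y0(2) v by blast
        then have "\<bar>s\<bar> * norm (y0 - v) \<le> \<bar>s\<bar> * norm (x - v)" by (simp add: mult_left_mono)
        moreover have "\<bar>s\<bar> * norm (y0 - v) = norm y'" using False by (simp add: v_def)
        moreover have "\<bar>s\<bar> * norm (x - v) = norm (s *\<^sub>R (x - v))" by simp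
        moreover have "s *\<^sub>R (x - v) = y' + s *\<^sub>R (x - y0)" using False
          by (simp add: v_def algebra_simps)
        ultimately show ?thesis by simp
      qed
    qed
    then have "f (x - y0) = 0" using birkhoff_zero[OF sm y'(2) y'(3)] by blast
    then show "f x = f y0" by (simp add: blinfun.diff_right)
  qed
  have cosuff: "is_best_coapprox Y x y0" if "y0 \<in> Y" "\<forall>f\<in>S. f x = f y0" for x y0
    unfolding is_best_coapprox_def
  proof (intro conjI ballI)
    show "y0 \<in> Y" by fact
    fix y assume "y \<in> Y"
    show "norm (y0 - y) \<le> norm (x - y)"
    proof (cases "y0 - y = 0")
      case True then show ?thesis by simp
    next
      case False
      have "y0 - y \<in> Y" using \<open>y \<in> Y\<close> that(1) assms(2) by (simp add: subspace_diff)
      then obtain f where f: "f \<in> S" "f (y0 - y) = norm (y0 - y)" using exS False by blast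
      have "norm f = 1" using f(1) by (simp add: S_def)
      have "f (y0 - y) = f (x - y)" using that(2) f(1) by (simp add: blinfun.diff_right)
      also have "\<dots> \<le> norm (x - y)" using norm_blinfun[of f "x - y"] \<open>norm f = 1\<close> by simp
      finally show ?thesis using f(2) by simp
    qed
  qed
  show ?thesis
    unfolding S_def[symmetric]
  proof
    assume co: "coproximinal Y"
    have claimK: "card C \<le> n" if C: "C \<subseteq> S" "finite C" "independent C" for C
    proof -
      define R where "R g = (\<lambda>b. if b \<in> BY then blinfun_apply g b else 0)" for g :: "'a \<Rightarrow>\<^sub>L real"
      have lin: "linear R"
        by (auto simp: linear_iff R_def fun_eq_iff scaleR_fun_def plus_blinfun.rep_eq scaleR_blinfun.rep_eq)
      have ker: "\<forall>g\<in>span C. R g = 0 \<longrightarrow> g = 0"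
      proof (intro ballI impI)
        fix g assume g: "g \<in> span C" "R g = 0"
        have gb: "\<forall>b\<in>BY. g b = 0"
        proof
          fix b assume "b \<in> BY"
          then have "R g b = g b" by (simp add: R_def)
          then show "g b = 0" using g(2) by simp
        qed
        show "g = 0"
        proof (rule blinfun_eqI)
          fix x
          obtain y0 where y0: "is_best_coapprox Y x y0" using co unfolding coproximinal_def by blast
          have "y0 \<in> Y" using y0 by (simp add: is_best_coapprox_def)
          have "\<forall>f\<in>C. f (x - y0) = 0" using cochar[OF y0] C(1) by (auto simp: blinfun.diff_right)
          then have "g (x - y0) = 0" using span_eval0[OF g(1)] by blast
          moreover have "g y0 = 0" using kernel_span[of y0 BY g] gb \<open>y0 \<in> Y\<close> BY(4) by blast
          ultimately show "g x = blinfun_apply 0 x" by (simp add: blinfun.diff_right)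
        qed
      qed
      have inj: "inj_on R (span C)" using linear_inj_on_iff_eq_0[OF lin subspace_span] ker by blast
      have ind: "independent (R ` C)" using linear_independent_injective_image[OF lin C(3) inj] .
      have injC: "inj_on R C" using inj span_superset inj_on_subset by blast
      have "card (R ` C) \<le> card BY"
        using card_bound[OF BY(1) ind] by (auto simp: R_def)
      then show ?thesis using card_image[OF injC] BY(3) by simp
    qed
    obtain B where B: "B \<subseteq> S" "independent B" "S \<subseteq> span B"
      using maximal_independent_subset by blast
    have finB: "finite B"
    proof (rule ccontr)
      assume "infinite B"
      then obtain C where C: "finite C" "card C = n + 1" "C \<subseteq> B"
        using infinite_arbitrarily_large by blast
      have "independent C" using B(2) C(3) independent_mono by blast
      moreover have "C \<subseteq> S" using C(3) B(1) by blast
      ultimately have "card C \<le> n" using claimK C(1) by blast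
      then show False using C(2) by simp
    qed
    have le1: "card B \<le> n" using claimK[OF B(1) finB B(2)] .
    have spB: "span B = span S"
    proof
      show "span B \<subseteq> span S" using B(1) by (rule span_mono)
      show "span S \<subseteq> span B" using B(3) by (intro span_minimal subspace_span)
    qed
    have "card BY \<le> card B" using dual_lemma(1)[OF finB BY(1) BY(2)] sepS spB by simp
    then show "has_dimension (span S) n"
      unfolding has_dimension_def using finB B(2) le1 BY(3) spB by (intro exI[of _ B]) auto
  next
    assume "has_dimension (span S) n"
    then obtain BD where BD: "finite BD" "independent BD" "card BD = n" "span BD = span S"
      unfolding has_dimension_def by blast
    show "coproximinal Y" unfolding coproximinal_def
    proof
      fix x
      have sep': "\<forall>u\<in>span BY. u \<noteq> 0 \<longrightarrow> (\<exists>f\<in>span BD. f u \<noteq> 0)"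
        using sepS BD(4) by simp
      have "card BD \<le> card BY" using BD(3) BY(3) by simp
      then obtain y0 where y0: "y0 \<in> span BY" "\<forall>f\<in>BD. f x = f y0"
        using dual_lemma(2)[OF BD(1) BY(1) BY(2) sep', of x] by blast
      have "\<forall>f\<in>S. f x = f y0"
      proof
        fix f assume "f \<in> S"
        then have "f \<in> span BD" using BD(4) span_superset by blast
        moreover have "\<forall>g\<in>BD. g (x - y0) = 0" using y0(2) by (simp add: blinfun.diff_right)
        ultimately have "f (x - y0) = 0" using span_eval0 by blast
        then show "f x = f y0" by (simp add: blinfun.diff_right)
      qed
      then show "\<exists>y0. is_best_coapprox Y x y0" using cosuff y0(1) BY(4) by blast
    qed
  qed
qed

end
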